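(* Let $\alpha$ be a unit-speed curve in $\mathbb{R}^3$ with nonvanishing curvature, let $\alpha_T$ be its tangent indicatrix, and let $\beta$ be a Bertrand-direction curve of $\alpha_T$ (an $X$-direction curve of $\alpha_T$ with $N_\beta=N_T$). Then: (i) $\alpha_T$ is a spherical helix if and only if $\beta$ is a helix; (ii) $\alpha_T$ is a spherical slant helix if and only if $\beta$ is a slant helix.
   Context: Let $\alpha:I\subset\mathbb{R}\to\mathbb{R}^3$ be a unit-speed curve with curvature $\kappa>0$, torsion $\tau$ and Frenet frame $\{T,N,B\}$. The tangent indicatrix of $\alpha$ is the curve $\alpha_T=T$ on the unit sphere. Its arc length is $s_T=\int\kappa\,ds$. Its Frenet apparatus is $\{T_T,N_T,B_T,\kappa_T,\tau_T\}$, with $\frac{dT_T}{ds_T}=\kappa_TN_T$, $\frac{dN_T}{ds_T}=-\kappa_TT_T+\tau_TB_T$ and $\frac{dB_T}{ds_T}=-\tau_TN_T$. Let $x,y,z$ be real functions of $s_T$ with $x^2+y^2+z^2=1$, and set $X=xT_T+yN_T+zB_T$. An integral curve $\beta$ of $X$, meaning $d\beta/ds_T=X$, is an $X$-direction curve of $\alpha_T$. It is regarded as a unit-speed Frenet curve with frame $\{T_\beta=X,N_\beta,B_\beta\}$, curvature $\kappa_\beta>0$ and torsion $\tau_\beta$. $\beta$ is a Bertrand-direction curve of $\alpha_T$ if $N_\beta=N_T$. A curve with curvature $k>0$ and torsion $t$ is a helix if its unit tangent makes a constant angle with a fixed line; equivalently, $t/k$ is constant. It is a slant helix if its principal normal makes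 a constant angle with a fixed line; equivalently, $\frac{k^2}{(k^2+t^2)^{3/2}}(t/k)'$ is constant, where $'$ is the derivative with respect to arc length. A spherical helix (respectively, spherical slant helix) is a helix (respectively, slant helix) lying on a sphere. *)

theory Defs
  imports "HOL-Analysis.Analysis"
begin

definition frenet_curve ::
  "real set \<Rightarrow> (real \<Rightarrow> real^3) \<Rightarrow> (real \<Rightarrow> real^3) \<Rightarrow> (real \<Rightarrow> real^3) \<Rightarrow> (real \<Rightarrow> real^3)
   \<Rightarrow> (real \<Rightarrow> real) \<Rightarrow> (real \<Rightarrow> real) \<Rightarrow> bool" where
  "frenet_curve J c T N B k t \<longleftrightarrow>
     (\<forall>s\<in>J.
        (c has_vector_derivative T s) (at s) \<and>
        (T has_vector_derivative (k s *\<^sub>R N s)) (at s) \<and>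
        (N has_vector_derivative (- (k s *\<^sub>R T s) + t s *\<^sub>R B s)) (at s) \<and>
        (B has_vector_derivative (- (t s *\<^sub>R N s))) (at s) \<and>
        norm (T s) = 1 \<and> norm (N s) = 1 \<and> T s \<bullet> N s = 0 \<and>
        B s = cross3 (T s) (N s) \<and> k s > 0)"

definition vec_angle :: "real^3 \<Rightarrow> real^3 \<Rightarrow> real" where
  "vec_angle v w = arccos ((v \<bullet> w) / (norm v * norm w))"

definition unit_tangent :: "(real \<Rightarrow> real^3) \<Rightarrow> real \<Rightarrow> real^3" where
  "unit_tangent c s = (1 / norm (vector_derivative c (at s))) *\<^sub>R vector_derivative c (at s)"

definition principal_normal :: "(real \<Rightarrow> real^3) \<Rightarrow> real \<Rightarrow> real^3" where
  "principal_normal c s =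
     (1 / norm (vector_derivative (unit_tangent c) (at s))) *\<^sub>R vector_derivative (unit_tangent c) (at s)"

definition helix :: "real set \<Rightarrow> (real \<Rightarrow> real^3) \<Rightarrow> bool" where
  "helix J c \<longleftrightarrow> (\<exists>u. u \<noteq> 0 \<and> (\<exists>\<theta>. \<forall>s\<in>J. vec_angle (unit_tangent c s) u = \<theta>))"

definition slant_helix :: "real set \<Rightarrow> (real \<Rightarrow> real^3) \<Rightarrow> bool" where
  "slant_helix J c \<longleftrightarrow> (\<exists>u. u \<noteq> 0 \<and> (\<exists>\<theta>. \<forall>s\<in>J. vec_angle (principal_normal c s) u = \<theta>))"

definition spherical :: "real set \<Rightarrow> (real \<Rightarrow> real^3) \<Rightarrow> bool" where
  "spherical J c \<longleftrightarrow> (\<exists>m r. r > 0 \<and> (\<forall>s\<in>J. dist (c s) m = r))"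

end

theory Submission
  imports Defs "HOL-Homology.Invariance_of_Domain"
begin

lemma inner_deriv:
  assumes "((T::real\<Rightarrow>real^3) has_vector_derivative v) (at s)"
  shows "((\<lambda>s. T s \<bullet> u) has_real_derivative (v \<bullet> u)) (at s)"
proof -
  have "((\<lambda>s. T s \<bullet> u) has_derivative (\<lambda>h. (h *\<^sub>R v) \<bullet> u)) (at s)"
    using bounded_linear.has_derivative[OF bounded_linear_inner_left assms[unfolded has_vector_derivative_def]] .
  then show ?thesis
  proof -
    have e: "(\<lambda>h. (h *\<^sub>R v) \<bullet> u) = (*) (v \<bullet> u)" by (auto simp: fun_eq_iff)
    show ?thesis using \<open>((\<lambda>s. T s \<bullet> u) has_derivative (\<lambda>h. (h *\<^sub>R v) \<bullet> u)) (at s)\<close>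
      unfolding has_field_derivative_def e .
  qed
qed

lemma absdiv: "\<bar>a\<bar> \<le> b \<Longrightarrow> b > 0 \<Longrightarrow> \<bar>a / b\<bar> \<le> (1::real)"
  by (simp add: abs_divide)

lemma ut: "frenet_curve J c T N B k t \<Longrightarrow> s \<in> J \<Longrightarrow> unit_tangent c s = T s"
  unfolding frenet_curve_def unit_tangent_def
  by (auto simp: vector_derivative_at)

lemma pn:
  assumes F: "frenet_curve J c T N B k t" and "open J" "s \<in> J"
  shows "principal_normal c s = N s"
proof -
  have d: "(T has_vector_derivative k s *\<^sub>R N s) (at s)" and k: "k s > 0" and n: "norm (N s) = 1"
    using F assms unfolding frenet_curve_def by auto
  have "(unit_tangent c has_vector_derivative k s *\<^sub>R N s) (at s)"
    by (rule has_vector_derivative_transform_within_open[OF d \<open>open J\<close> \<open>s \<in> J\<close>])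
       (use ut[OF F] in auto)
  then have "vector_derivative (unit_tangent c) (at s) = k s *\<^sub>R N s"
    by (simp add: vector_derivative_at)
  then show ?thesis using k n by (simp add: principal_normal_def)
qed

lemma helix_iff:
  assumes F: "frenet_curve J c T N B k t" and "open J" "is_interval J"
  shows "helix J c \<longleftrightarrow> (\<exists>u. u \<noteq> 0 \<and> (\<forall>s\<in>J. N s \<bullet> u = 0))"
proof
  assume "helix J c"
  then obtain u \<theta> where u: "u \<noteq> 0" and th: "\<forall>s\<in>J. vec_angle (unit_tangent c s) u = \<theta>"
    unfolding helix_def by blast
  have cst: "T s \<bullet> u = cos \<theta> * norm u" if "s \<in> J" for s
  proof -
    have nT: "norm (T s) = 1" using F that unfolding frenet_curve_def by auto
    have "arccos ((T s \<bullet> u) / norm u) = \<theta>"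
      using th[rule_format, OF that] ut[OF F that] nT by (simp add: vec_angle_def)
    moreover have "\<bar>(T s \<bullet> u) / norm u\<bar> \<le> 1"
    proof -
      have "\<bar>T s \<bullet> u\<bar> \<le> norm u" using Cauchy_Schwarz_ineq2[of "T s" u] unfolding nT mult_1 .
      moreover have "norm u > 0" using u by simp
      ultimately show ?thesis by (rule absdiv)
    qed
    ultimately have "(T s \<bullet> u) / norm u = cos \<theta>"
      using cos_arccos_abs by metis
    then show ?thesis using u by (metis divide_eq_eq norm_eq_zero)
  qed
  have "N s \<bullet> u = 0" if "s \<in> J" for s
  proof -
    have d: "(T has_vector_derivative k s *\<^sub>R N s) (at s)" and k: "k s > 0"
      using F that unfolding frenet_curve_def by auto
    have d1: "((\<lambda>s. T s \<bullet> u) has_real_derivative (k s *\<^sub>R N s) \<bullet> u) (at s)"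
      by (rule inner_deriv[OF d])
    have d2: "((\<lambda>s. T s \<bullet> u) has_real_derivative 0) (at s)"
      by (rule has_field_derivative_transform_within_open[OF DERIV_const \<open>open J\<close> that])
         (simp add: cst)
    have "(k s *\<^sub>R N s) \<bullet> u = 0" using DERIV_unique[OF d1 d2] .
    then show ?thesis using k by simp
  qed
  then show "\<exists>u. u \<noteq> 0 \<and> (\<forall>s\<in>J. N s \<bullet> u = 0)" using u by blast
next
  assume "\<exists>u. u \<noteq> 0 \<and> (\<forall>s\<in>J. N s \<bullet> u = 0)"
  then obtain u where u: "u \<noteq> 0" and n0: "\<forall>s\<in>J. N s \<bullet> u = 0" by blast
  have "\<exists>C. \<forall>s\<in>J. T s \<bullet> u = C"
  proof (rule has_field_derivative_zero_constant)
    show "convex J" using \<open>is_interval J\<close> by (simp add: is_interval_convex)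
    fix s assume s: "s \<in> J"
    have d: "(T has_vector_derivative k s *\<^sub>R N s) (at s)"
      using F s unfolding frenet_curve_def by auto
    have "((\<lambda>s. T s \<bullet> u) has_real_derivative (k s *\<^sub>R N s) \<bullet> u) (at s)"
      by (rule inner_deriv[OF d])
    then show "((\<lambda>s. T s \<bullet> u) has_real_derivative 0) (at s within J)"
      using n0 s by (simp add: has_field_derivative_at_within)
  qed
  then obtain C where C: "\<forall>s\<in>J. T s \<bullet> u = C" by blast
  have "vec_angle (unit_tangent c s) u = arccos (C / norm u)" if s: "s \<in> J" for s
  proof -
    have nT: "norm (T s) = 1" using F s unfolding frenet_curve_def by auto
    show ?thesis using C s ut[OF F s] nT unfolding vec_angle_def by simp
  qed
  then show "helix J c" unfolding helix_def using u by blast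
qed

lemma slant_eq:
  assumes "\<forall>s\<in>J. principal_normal c s = principal_normal d s"
  shows "slant_helix J c \<longleftrightarrow> slant_helix J d"
  using assms unfolding slant_helix_def by auto

lemma sigma_props:
  fixes \<sigma> \<kappa> :: "real \<Rightarrow> real"
  assumes I: "is_interval I" "open I"
    and d: "\<And>s. s \<in> I \<Longrightarrow> (\<sigma> has_real_derivative \<kappa> s) (at s)"
    and pos: "\<And>s. s \<in> I \<Longrightarrow> \<kappa> s > 0"
  shows "is_interval (\<sigma> ` I)" "open (\<sigma> ` I)"
proof -
  have cont: "continuous_on I \<sigma>"
    using d by (meson DERIV_isCont continuous_at_imp_continuous_on)
  have "connected (\<sigma> ` I)"
    using connected_continuous_image[OF cont] is_interval_connected[OF I(1)] by blast
  then show "is_interval (\<sigma> ` I)" by (simp add: is_interval_connected_1)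
  have mono: "\<sigma> a < \<sigma> b" if "a \<in> I" "b \<in> I" "a < b" for a b
  proof (rule DERIV_pos_imp_increasing[OF \<open>a < b\<close>])
    fix x assume "a \<le> x" "x \<le> b"
    then have "x \<in> I" using I(1) that by (meson mem_is_interval_1_I)
    then show "\<exists>y. (\<sigma> has_real_derivative y) (at x) \<and> y > 0" using d pos by blast
  qed
  have "inj_on \<sigma> I"
  proof (rule inj_onI)
    fix a b assume "a \<in> I" "b \<in> I" "\<sigma> a = \<sigma> b"
    then show "a = b" using mono by (metis less_irrefl linorder_neqE_linordered_idom)
  qed
  then show "open (\<sigma> ` I)" using invariance_of_domain[OF cont I(2)] by blast
qed

theorem theorem5p5:
  fixes I J :: "real set"
    and \<alpha> T N B :: "real \<Rightarrow> real^3" and \<kappa> \<tau> :: "real \<Rightarrow> real"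
    and \<sigma> :: "real \<Rightarrow> real"
    and \<alpha>T TT NT BT :: "real \<Rightarrow> real^3" and \<kappa>T \<tau>T :: "real \<Rightarrow> real"
    and x y z :: "real \<Rightarrow> real"
    and \<beta> N\<beta> B\<beta> :: "real \<Rightarrow> real^3" and \<kappa>\<beta> \<tau>\<beta> :: "real \<Rightarrow> real"
  assumes I: "is_interval I" "open I" "I \<noteq> {}"
    and alpha: "frenet_curve I \<alpha> T N B \<kappa> \<tau>"
    and sigma_deriv: "\<And>s. s \<in> I \<Longrightarrow> (\<sigma> has_real_derivative \<kappa> s) (at s)"
    and J: "J = \<sigma> ` I"
    and alphaT: "\<And>s. s \<in> I \<Longrightarrow> \<alpha>T (\<sigma> s) = T s"
    and alphaT_frenet: "frenet_curve J \<alpha>T TT NT BT \<kappa>T \<tau>T"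
    and xyz: "\<And>u. u \<in> J \<Longrightarrow> (x u)\<^sup>2 + (y u)\<^sup>2 + (z u)\<^sup>2 = 1"
    and beta: "frenet_curve J \<beta> (\<lambda>u. x u *\<^sub>R TT u + y u *\<^sub>R NT u + z u *\<^sub>R BT u) N\<beta> B\<beta> \<kappa>\<beta> \<tau>\<beta>"
    and bertrand: "\<And>u. u \<in> J \<Longrightarrow> N\<beta> u = NT u"
  shows "(spherical J \<alpha>T \<and> helix J \<alpha>T \<longleftrightarrow> helix J \<beta>)
       \<and> (spherical J \<alpha>T \<and> slant_helix J \<alpha>T \<longleftrightarrow> slant_helix J \<beta>)"
proof -
  have kpos: "\<And>s. s \<in> I \<Longrightarrow> \<kappa> s > 0" using alpha unfolding frenet_curve_def by blast
  have Jint: "is_interval J" and Jopen: "open J"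
    using sigma_props[OF I(1,2) sigma_deriv kpos] J by auto
  have sph: "spherical J \<alpha>T"
    unfolding spherical_def
  proof (intro exI conjI ballI)
    show "(1::real) > 0" by simp
    fix u assume "u \<in> J"
    then obtain s where s: "s \<in> I" "u = \<sigma> s" using J by blast
    have "norm (T s) = 1" using alpha s unfolding frenet_curve_def by blast
    then show "dist (\<alpha>T u) 0 = 1" using alphaT s by simp
  qed
  have h: "helix J \<alpha>T \<longleftrightarrow> helix J \<beta>"
    using helix_iff[OF alphaT_frenet Jopen Jint] helix_iff[OF beta Jopen Jint] bertrand by auto
  have sl: "slant_helix J \<alpha>T \<longleftrightarrow> slant_helix J \<beta>"
    by (rule slant_eq) (use pn[OF alphaT_frenet Jopen] pn[OF beta Jopen] bertrand in auto)
  show ?thesis using sph h sl by blast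
qed

end
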